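(* Let $m$ be a monomial of $S=k[x_1,\dots,x_n]$ with $\max(m)=k$, and let $B=\mathrm{Borel}(m)$. Then for every $i\ge0$, \[b_{i-1}(B)+b_i\!\left(\mathrm{Borel}\!\left(\tfrac{m}{x_k}\right)\right)=\binom{k}{i}\,w_k(B),\] where $b_{-1}(B)=0$ and, if $m=x_k$, $\mathrm{Borel}(1)=S$ (with $b_0(S)=1$, $b_i(S)=0$ for $i>0$).
   Context: $\mathrm{Borel}(\mu)$ is the smallest monomial ideal containing $\mu$ closed under Borel moves $\nu\mapsto\nu\frac{x_{a_1}}{x_{b_1}}\cdots\frac{x_{a_s}}{x_{b_s}}$ ($a_t<b_t$, all $x_{b_t}\mid\nu$). For a monomial $\mu=x_{k_1}\cdots x_{k_r}$ ($k_1\le\dots\le k_r$), $\max(\mu)=k_r$. $w_k(B)$ is the number of minimal monomial generators $\mu$ of $B$ with $\max(\mu)=k$. $b_i(I)=\dim_k\operatorname{Tor}_i^S(I,k)$ is the $i$-th total Betti number of the ideal $I$ (so $b_0(I)$ is the number of minimal generators). *)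

theory Defs
  imports Complex_Main "HOL-Library.Multiset" "HOL-Library.Function_Algebras"
begin

text \<open>Monomials of S = k[x_1,...,x_n] are multisets of variable indices in {1..n};
  x_{k_1}...x_{k_r} corresponds to the multiset {#k_1,...,k_r#}. Divisibility is subset_mset.
  A monomial ideal is represented by its set of monomials.\<close>

type_synonym mon = "nat multiset"

definition monomials :: "nat \<Rightarrow> mon set" where
  "monomials n = {\<mu>. set_mset \<mu> \<subseteq> {1..n}}"

definition maxvar :: "mon \<Rightarrow> nat" where
  "maxvar \<mu> = Max (set_mset \<mu>)"

inductive_set Borel :: "nat \<Rightarrow> mon \<Rightarrow> mon set" for n :: nat and \<mu> :: mon where
  base: "set_mset \<mu> \<subseteq> {1..n} \<Longrightarrow> \<mu> \<in> Borel n \<mu>"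
| move: "\<nu> \<in> Borel n \<mu> \<Longrightarrow> b \<in># \<nu> \<Longrightarrow> 1 \<le> a \<Longrightarrow> a < b \<Longrightarrow> \<nu> - {#b#} + {#a#} \<in> Borel n \<mu>"
| mult: "\<nu> \<in> Borel n \<mu> \<Longrightarrow> c \<in> {1..n} \<Longrightarrow> \<nu> + {#c#} \<in> Borel n \<mu>"

definition mingens :: "mon set \<Rightarrow> mon set" where
  "mingens I = {\<mu> \<in> I. \<forall>\<nu>\<in>I. \<nu> \<subseteq># \<mu> \<longrightarrow> \<nu> = \<mu>}"

definition w :: "nat \<Rightarrow> mon set \<Rightarrow> nat" where
  "w k I = card {\<mu> \<in> mingens I. maxvar \<mu> = k}"

text \<open>Tor_i^S(I,k) computed via the Koszul complex K(x_1,...,x_n) tensored with I, in each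
  multidegree alpha. The degree-alpha part of I \<otimes> \<wedge>^i k^n has basis the i-subsets F of {1..n}
  with x^(alpha - e_F) \<in> I; chains are functions on these sets with values in the field.\<close>

definition kface :: "nat \<Rightarrow> mon set \<Rightarrow> mon \<Rightarrow> nat \<Rightarrow> nat set set" where
  "kface n I \<alpha> i = {F. F \<subseteq> {1..n} \<and> card F = i \<and> mset_set F \<subseteq># \<alpha> \<and> \<alpha> - mset_set F \<in> I}"

definition kchains :: "nat \<Rightarrow> mon set \<Rightarrow> mon \<Rightarrow> nat \<Rightarrow> (nat set \<Rightarrow> 'a::field) set" where
  "kchains n I \<alpha> i = {c. \<forall>F. F \<notin> kface n I \<alpha> i \<longrightarrow> c F = 0}"

definition ksign :: "nat \<Rightarrow> nat set \<Rightarrow> 'a::field" where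
  "ksign j F = (-1) ^ card {l \<in> F. l < j}"

text \<open>Koszul differential d_i : C_i -> C_{i-1}, e_F |-> sum_{j in F} sign(j,F) x_j e_{F-j}
  (d_0 = 0).\<close>

definition kdiff :: "nat \<Rightarrow> mon set \<Rightarrow> mon \<Rightarrow> nat \<Rightarrow> (nat set \<Rightarrow> 'a::field) \<Rightarrow> (nat set \<Rightarrow> 'a)" where
  "kdiff n I \<alpha> i c = (\<lambda>G. if i = 0 then 0 else if G \<in> kface n I \<alpha> (i - 1) then
      (\<Sum>j\<in>{1..n} - G. if insert j G \<in> kface n I \<alpha> i then ksign j (insert j G) * c (insert j G) else 0)
     else 0)"

definition khomdim :: "'a::field itself \<Rightarrow> nat \<Rightarrow> mon set \<Rightarrow> mon \<Rightarrow> nat \<Rightarrow> nat" where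
  "khomdim _ n I \<alpha> i =
     vector_space.dim (\<lambda>(r::'a) f x. r * f x) {c \<in> kchains n I \<alpha> i. kdiff n I \<alpha> i c = 0}
   - vector_space.dim (\<lambda>(r::'a) f x. r * f x) (kdiff n I \<alpha> (Suc i) ` kchains n I \<alpha> (Suc i))"

definition betti :: "'a::field itself \<Rightarrow> nat \<Rightarrow> mon set \<Rightarrow> nat \<Rightarrow> nat" where
  "betti T n I i = (\<Sum>\<alpha> \<in> {\<alpha> \<in> monomials n. khomdim T n I \<alpha> i \<noteq> 0}. khomdim T n I \<alpha> i)"

end

theory Submission
  imports Defs
begin

definition cle :: "mon \<Rightarrow> nat \<Rightarrow> nat" where
  "cle \<mu> j = size (filter_mset (\<lambda>x. x \<le> j) \<mu>)"

definition bdom :: "mon \<Rightarrow> mon \<Rightarrow> bool" where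
  "bdom \<mu> m = (\<forall>j. cle m j \<le> cle \<mu> j)"

lemma cle_add: "cle (\<nu> + {#a#}) j = cle \<nu> j + (if a \<le> j then 1 else 0)"
  by (simp add: cle_def)

lemma cle_add_mset: "cle (add_mset a \<nu>) j = cle \<nu> j + (if a \<le> j then 1 else 0)"
  by (simp add: cle_def)

lemma cle_diff: "b \<in># \<nu> \<Longrightarrow> cle (\<nu> - {#b#}) j + (if b \<le> j then 1 else 0) = cle \<nu> j"
  using cle_add_mset[of b "\<nu> - {#b#}" j] by simp

lemma cle_empty[simp]: "cle {#} j = 0" by (simp add: cle_def)

lemma cle_big: "\<forall>x\<in>#\<mu>. x \<le> j \<Longrightarrow> cle \<mu> j = size \<mu>"
  by (induction \<mu>) (auto simp: cle_add_mset)

lemma cle_small: "\<forall>x\<in>#\<mu>. j < x \<Longrightarrow> cle \<mu> j = 0"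
proof -
  assume a: "\<forall>x\<in>#\<mu>. j < x"
  have "filter_mset (\<lambda>x. x \<le> j) \<mu> = {#}" using a by (simp add: not_le)
  then show ?thesis unfolding cle_def using gr0I by blast
qed

lemma cle_le_size: "cle \<mu> j \<le> size \<mu>"
  unfolding cle_def by (rule size_filter_mset_lesseq)

lemma cle_pos: "x \<in># \<mu> \<Longrightarrow> x \<le> j \<Longrightarrow> 0 < cle \<mu> j"
proof -
  assume a: "x \<in># \<mu>" "x \<le> j"
  have "filter_mset (\<lambda>x. x \<le> j) \<mu> \<noteq> {#}" using a by auto
  then have "size (filter_mset (\<lambda>x. x \<le> j) \<mu>) \<noteq> 0" by (simp only: size_eq_0_iff_empty) simp
  then show ?thesis unfolding cle_def using gr0I by blast
qed

lemma borel_sub: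
  assumes "\<mu> \<in> Borel n m"
  shows "set_mset \<mu> \<subseteq> {1..n} \<and> bdom \<mu> m"
  using assms
proof (induction rule: Borel.induct)
  case base then show ?case by (simp add: bdom_def)
next
  case (move \<nu> b a)
  have "b \<le> n" using move by auto
  have s: "set_mset (\<nu> - {#b#} + {#a#}) \<subseteq> {1..n}"
    using move \<open>b \<le> n\<close> by (auto dest: in_diffD)
  have "cle \<nu> j \<le> cle (\<nu> - {#b#} + {#a#}) j" for j
    using cle_diff[OF move(2), of j] cle_add[of "\<nu> - {#b#}" a j] move(4)
    by (auto split: if_splits)
  then have "bdom (\<nu> - {#b#} + {#a#}) m" using move(5) unfolding bdom_def using le_trans by blast
  then show ?case using s by simp
next
  case (mult \<nu> c)
  have "cle \<nu> j \<le> cle (\<nu> + {#c#}) j" for j by (simp add: cle_add_mset)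
  then have "bdom (\<nu> + {#c#}) m" using mult(3) unfolding bdom_def using le_trans by blast
  moreover have "set_mset (\<nu> + {#c#}) \<subseteq> {1..n}" using mult by auto
  ultimately show ?case by simp
qed


lemma borel_shift:
  assumes "\<nu> \<in> Borel n m'" "a \<le> b" "1 \<le> a" "b \<le> n"
  shows "\<nu> + {#a#} \<in> Borel n (m' + {#b#})"
  using assms(1)
proof (induction rule: Borel.induct)
  case base
  have b: "m' + {#b#} \<in> Borel n (m' + {#b#})"
    using base assms by (intro Borel.base) auto
  show ?case
  proof (cases "a = b")
    case True then show ?thesis using b by simp
  next
    case False
    then have "a < b" using assms by simp
    from Borel.move[OF b _ assms(3) this] show ?thesis by simp
  qed
next
  case (move \<nu> b' a')
  obtain \<nu>0 where \<nu>0: "\<nu> = add_mset b' \<nu>0" using move(2) by (metis mset_add)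
  have "b' \<in># \<nu> + {#a#}" using move(2) by simp
  from Borel.move[OF move(5) this move(3) move(4)]
  show ?case using \<nu>0 by (simp add: add_mset_commute)
next
  case (mult \<nu> c)
  from Borel.mult[OF mult(3) mult(2)] show ?case by (simp add: add_mset_commute)
qed

lemma borel_empty_all:
  assumes "set_mset \<mu> \<subseteq> {1..n}"
  shows "\<mu> \<in> Borel n {#}"
  using assms
proof (induction \<mu>)
  case empty then show ?case by (intro Borel.base) auto
next
  case (add x \<mu>)
  then have "\<mu> + {#x#} \<in> Borel n {#}" by (intro Borel.mult) auto
  then show ?case by simp
qed


lemma borel_sup:
  "set_mset m \<subseteq> {1..n} \<Longrightarrow> set_mset \<mu> \<subseteq> {1..n} \<Longrightarrow> bdom \<mu> m \<Longrightarrow> \<mu> \<in> Borel n m"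
proof (induction "size m" arbitrary: m \<mu> rule: less_induct)
  case less
  show ?case
  proof (cases "m = {#}")
    case True then show ?thesis using borel_empty_all less by simp
  next
    case False
    define b where "b = Min (set_mset m)"
    have bm: "b \<in># m" using False b_def by (simp add: Min_in)
    have bmin: "\<forall>x\<in>#m. b \<le> x" using b_def by simp
    have "cle m n = size m" using less(2) by (intro cle_big) auto
    moreover have "0 < size m" using False by (simp add: nonempty_has_size)
    ultimately have "0 < cle \<mu> n" using less(4) unfolding bdom_def by (metis less_le_trans)
    then have "\<mu> \<noteq> {#}" by (auto simp: cle_def)
    define a where "a = Min (set_mset \<mu>)"
    have am: "a \<in># \<mu>" using \<open>\<mu> \<noteq> {#}\<close> a_def by (simp add: Min_in)
    have amin: "\<forall>x\<in>#\<mu>. a \<le> x" using a_def by simp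
    have "0 < cle m b" using cle_pos[OF bm] by simp
    then have "0 < cle \<mu> b" using less(4) unfolding bdom_def by (metis less_le_trans)
    then obtain x where "x \<in># \<mu>" "x \<le> b"
      unfolding cle_def by (metis filter_mset_eq_mempty_iff less_not_refl size_empty)
    then have ab: "a \<le> b" using amin by force
    have d: "bdom (\<mu> - {#a#}) (m - {#b#})"
      unfolding bdom_def
    proof
      fix j
      have e1: "cle (\<mu> - {#a#}) j + (if a \<le> j then 1 else 0) = cle \<mu> j" by (rule cle_diff[OF am])
      have e2: "cle (m - {#b#}) j + (if b \<le> j then 1 else 0) = cle m j" by (rule cle_diff[OF bm])
      have e3: "cle m j \<le> cle \<mu> j" using less(4) by (simp add: bdom_def)
      show "cle (m - {#b#}) j \<le> cle (\<mu> - {#a#}) j"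
      proof (cases "j < b")
        case True
        then have "cle m j = 0" using bmin by (intro cle_small) force
        then show ?thesis using e2 by simp
      next
        case False
        then show ?thesis using e1 e2 e3 ab by (auto split: if_splits)
      qed
    qed
    have "size (m - {#b#}) < size m" using bm \<open>0 < size m\<close> by (simp add: size_Diff_submset)
    moreover have "set_mset (m - {#b#}) \<subseteq> {1..n}" using less(2) by (meson in_diffD subset_iff)
    moreover have "set_mset (\<mu> - {#a#}) \<subseteq> {1..n}" using less(3) by (meson in_diffD subset_iff)
    ultimately have "\<mu> - {#a#} \<in> Borel n (m - {#b#})" using less(1) d by blast
    moreover have "1 \<le> a" "b \<le> n" using am bm less(2,3) by auto
    ultimately have "\<mu> - {#a#} + {#a#} \<in> Borel n (m - {#b#} + {#b#})"
      using ab by (intro borel_shift) auto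
    then show ?thesis using am bm by simp
  qed
qed


lemma borel_char:
  "set_mset m \<subseteq> {1..n} \<Longrightarrow> \<mu> \<in> Borel n m \<longleftrightarrow> set_mset \<mu> \<subseteq> {1..n} \<and> bdom \<mu> m"
  using borel_sub borel_sup by blast

lemma bdom_size:
  assumes "set_mset m \<subseteq> {1..n}" "set_mset \<mu> \<subseteq> {1..n}" "bdom \<mu> m"
  shows "size m \<le> size \<mu>"
proof -
  have "cle m n = size m" "cle \<mu> n = size \<mu>" using assms by (auto intro!: cle_big)
  moreover have "cle m n \<le> cle \<mu> n" using assms(3) unfolding bdom_def by blast
  ultimately show ?thesis by simp
qed

lemma drop_max:
  assumes "bdom u m" "size m < size u" "t \<in># u" "\<forall>x\<in>#u. x \<le> t"
  shows "bdom (u - {#t#}) m"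
  unfolding bdom_def
proof
  fix j
  have e1: "cle (u - {#t#}) j + (if t \<le> j then 1 else 0) = cle u j" by (rule cle_diff[OF assms(3)])
  show "cle m j \<le> cle (u - {#t#}) j"
  proof (cases "t \<le> j")
    case True
    then have "cle u j = size u" using assms(4) by (intro cle_big) force
    then show ?thesis using e1 True assms(2) cle_le_size[of m j] by simp
  next
    case False
    then show ?thesis using e1 assms(1) by (simp add: bdom_def)
  qed
qed

lemma mingens_char:
  assumes "set_mset m \<subseteq> {1..n}"
  shows "mingens (Borel n m) = {g. set_mset g \<subseteq> {1..n} \<and> bdom g m \<and> size g = size m}"
proof
  show "mingens (Borel n m) \<subseteq> {g. set_mset g \<subseteq> {1..n} \<and> bdom g m \<and> size g = size m}"
  proof
    fix g assume g: "g \<in> mingens (Borel n m)"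
    then have gB: "g \<in> Borel n m" and gmin: "\<forall>\<nu>\<in>Borel n m. \<nu> \<subseteq># g \<longrightarrow> \<nu> = g"
      by (auto simp: mingens_def)
    have sd: "set_mset g \<subseteq> {1..n}" "bdom g m" using borel_sub[OF gB] by auto
    have le: "size m \<le> size g" using bdom_size[OF assms sd] .
    have "size g = size m"
    proof (rule ccontr)
      assume "size g \<noteq> size m"
      then have lt: "size m < size g" using le by simp
      then have "g \<noteq> {#}" by auto
      define t where "t = Max (set_mset g)"
      have tg: "t \<in># g" using \<open>g \<noteq> {#}\<close> unfolding t_def by (intro Max_in) auto
      have "\<forall>x\<in>#g. x \<le> t" using t_def by simp
      then have "bdom (g - {#t#}) m" using drop_max[OF sd(2) lt tg] by simp
      moreover have "set_mset (g - {#t#}) \<subseteq> {1..n}" using sd(1) by (meson in_diffD subset_iff)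
      ultimately have "g - {#t#} \<in> Borel n m" using borel_sup[OF assms] by blast
      then have "g - {#t#} = g" using gmin by simp
      then have "count g t - 1 = count g t" by (metis count_diff count_single)
      moreover have "0 < count g t" using tg by (simp only: count_greater_zero_iff)
      ultimately show False by linarith
    qed
    then show "g \<in> {g. set_mset g \<subseteq> {1..n} \<and> bdom g m \<and> size g = size m}" using sd by simp
  qed
next
  show "{g. set_mset g \<subseteq> {1..n} \<and> bdom g m \<and> size g = size m} \<subseteq> mingens (Borel n m)"
  proof
    fix g assume g: "g \<in> {g. set_mset g \<subseteq> {1..n} \<and> bdom g m \<and> size g = size m}"
    then have gB: "g \<in> Borel n m" using borel_sup[OF assms] by blast
    have "\<nu> = g" if "\<nu> \<in> Borel n m" "\<nu> \<subseteq># g" for \<nu>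
    proof (rule ccontr)
      assume "\<nu> \<noteq> g"
      then have "\<nu> \<subset># g" using that(2) by (simp add: subset_mset.le_neq_trans)
      then have "size \<nu> < size g" by (rule mset_subset_size)
      moreover have "size m \<le> size \<nu>" using borel_sub[OF that(1)] bdom_size[OF assms] by blast
      ultimately show False using g by simp
    qed
    then show "g \<in> mingens (Borel n m)" using gB by (auto simp: mingens_def)
  qed
qed

lemma stable:
  assumes "set_mset m \<subseteq> {1..n}" "u \<in> Borel n m" "u \<notin> mingens (Borel n m)"
    "t \<in># u" "\<forall>x\<in>#u. x \<le> t"
  shows "u - {#t#} \<in> Borel n m"
proof -
  have sd: "set_mset u \<subseteq> {1..n}" "bdom u m" using borel_sub[OF assms(2)] by auto
  then have "size u \<noteq> size m" using assms(3) mingens_char[OF assms(1)] by auto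
  then have "size m < size u" using bdom_size[OF assms(1) sd] by simp
  then have "bdom (u - {#t#}) m" using drop_max sd assms by blast
  moreover have "set_mset (u - {#t#}) \<subseteq> {1..n}" using sd(1) by (meson in_diffD subset_iff)
  ultimately show ?thesis using borel_sup[OF assms(1)] by blast
qed


lemma fun_vs: "vector_space (\<lambda>(r::'a::field) (f::nat set \<Rightarrow> 'a) x. r * f x)"
  by unfold_locales (auto simp: fun_eq_iff algebra_simps)

global_interpretation fvs: vector_space "\<lambda>(r::'a::field) (f::nat set \<Rightarrow> 'a) x. r * f x"
  by (rule fun_vs)

lemma sum_fun_app: "(\<Sum>x\<in>A. (f x :: 'b \<Rightarrow> 'c::comm_monoid_add)) G = (\<Sum>x\<in>A. f x G)"
  by (induction A rule: infinite_finite_induct) auto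

lemma dim_restr:
  fixes U :: "(nat set \<Rightarrow> 'a::field) set" and P :: "nat set set"
  assumes fin: "finite P"
    and sub: "fvs.subspace U"
    and inj: "\<And>u. u \<in> U \<Longrightarrow> (\<forall>G\<in>P. u G = 0) \<Longrightarrow> u = 0"
    and surj: "\<And>G. G \<in> P \<Longrightarrow> \<exists>u\<in>U. \<forall>G'\<in>P. u G' = (if G' = G then 1 else 0)"
  shows "fvs.dim U = card P"
proof -
  obtain b where b: "\<And>G. G \<in> P \<Longrightarrow> b G \<in> U \<and> (\<forall>G'\<in>P. b G G' = (if G' = G then 1 else 0))"
    using surj by metis
  have binj: "inj_on b P"
  proof (rule inj_onI)
    fix G G' assume "G \<in> P" "G' \<in> P" "b G = b G'"
    then have "b G G = b G' G" by simp
    then show "G = G'" using b \<open>G \<in> P\<close> \<open>G' \<in> P\<close> by (auto split: if_splits)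
  qed
  define B where "B = b ` P"
  have cardB: "card B = card P" unfolding B_def using binj by (rule card_image)
  have BU: "B \<subseteq> U" unfolding B_def using b by auto
  have ind: "fvs.independent B"
  proof (rule fvs.independent_if_scalars_zero)
    show "finite B" unfolding B_def using fin by simp
  next
    fix f :: "(nat set \<Rightarrow> 'a) \<Rightarrow> 'a" and x
    assume s: "(\<Sum>x\<in>B. (\<lambda>y. f x * x y)) = 0" and x: "x \<in> B"
    then obtain G where G: "G \<in> P" "x = b G" unfolding B_def by auto
    have "(\<Sum>x\<in>B. (\<lambda>y. f x * x y)) G = 0" using s by simp
    then have "(\<Sum>y\<in>B. f y * y G) = 0" by (simp add: sum_fun_app)
    moreover have "(\<Sum>y\<in>B. f y * y G) = (\<Sum>G'\<in>P. f (b G') * b G' G)"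
      unfolding B_def using binj by (simp add: sum.reindex)
    moreover have "(\<Sum>G'\<in>P. f (b G') * b G' G) = (\<Sum>G'\<in>P. if G' = G then f (b G) else 0)"
      using b G(1) by (intro sum.cong) auto
    moreover have "\<dots> = f (b G)" using fin G(1) by simp
    ultimately show "f x = 0" using G by simp
  qed
  have span: "U \<subseteq> fvs.span B"
  proof
    fix u assume u: "u \<in> U"
    define w where "w = (\<Sum>G\<in>P. (\<lambda>y. u G * b G y))"
    have wspan: "w \<in> fvs.span B" unfolding w_def B_def
      by (intro fvs.span_sum fvs.span_scale fvs.span_base) auto
    have wU: "w \<in> U" unfolding w_def
      using b by (intro fvs.subspace_sum[OF sub] fvs.subspace_scale[OF sub]) auto
    have "u - w \<in> U" using fvs.subspace_diff[OF sub u wU] .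
    moreover have "\<forall>G\<in>P. (u - w) G = 0"
    proof
      fix G assume G: "G \<in> P"
      have "w G = (\<Sum>G'\<in>P. u G' * b G' G)" unfolding w_def by (simp add: sum_fun_app)
      also have "\<dots> = (\<Sum>G'\<in>P. if G' = G then u G else 0)"
        using b G by (intro sum.cong) auto
      also have "\<dots> = u G" using fin G by simp
      finally show "(u - w) G = 0" by simp
    qed
    ultimately have "u - w = 0" by (rule inj)
    then have "u = w" by simp
    then show "u \<in> fvs.span B" using wspan by simp
  qed
  show ?thesis using fvs.basis_card_eq_dim[OF BU span ind] cardB by simp
qed


lemma count_ms: "finite F \<Longrightarrow> count (mset_set F) x = (if x \<in> F then 1 else 0)"
  by (simp add: count_mset_set)

lemma ms_sub_iff: "finite F \<Longrightarrow> mset_set F \<subseteq># \<alpha> \<longleftrightarrow> (\<forall>x\<in>F. x \<in># \<alpha>)"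
  by (auto simp: subseteq_mset_def count_ms)

definition tv :: "mon \<Rightarrow> nat" where
  "tv \<alpha> = (if \<alpha> = {#} then 0 else Max (set_mset \<alpha>))"

lemma tv_in: "\<alpha> \<noteq> {#} \<Longrightarrow> tv \<alpha> \<in># \<alpha>"
  unfolding tv_def by (simp add: Max_in)

lemma tv_max: "x \<in># \<alpha> \<Longrightarrow> x \<le> tv \<alpha>"
  unfolding tv_def by auto

lemma face_props:
  assumes "F \<in> kface n I \<alpha> i"
  shows "F \<subseteq> {1..n}" "finite F" "card F = i" "mset_set F \<subseteq># \<alpha>" "\<alpha> - mset_set F \<in> I"
  using assms unfolding kface_def by (auto intro: finite_subset)

lemma face_del:
  assumes F: "F \<in> kface n (Borel n \<mu>) \<alpha> (Suc i)" and j: "j \<in> F"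
  shows "F - {j} \<in> kface n (Borel n \<mu>) \<alpha> i"
proof -
  note fp = face_props[OF F]
  define M' where "M' = mset_set (F - {j})"
  have M: "mset_set F = add_mset j M'" unfolding M'_def using fp(2) j by (rule mset_set.remove)
  have eq: "\<alpha> - M' = (\<alpha> - mset_set F) + {#j#}"
  proof (rule multiset_eqI)
    fix x
    have "count (mset_set F) x \<le> count \<alpha> x" using fp(4) by (simp add: subseteq_mset_def)
    then show "count (\<alpha> - M') x = count (\<alpha> - mset_set F + {#j#}) x" using M by auto
  qed
  have "j \<in> {1..n}" using fp(1) j by auto
  then have "\<alpha> - M' \<in> Borel n \<mu>" unfolding eq using fp(5) by (intro Borel.mult)
  moreover have "M' \<subseteq># \<alpha>"
  proof -
    have "M' \<subseteq># add_mset j M'" by simp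
    then show ?thesis using fp(4) M by (metis subset_mset.order_trans)
  qed
  moreover have "card (F - {j}) = i" using fp(2,3) j by simp
  ultimately show ?thesis using fp(1) unfolding kface_def M'_def by auto
qed

lemma ins_face:
  assumes G: "G \<in> kface n I \<alpha> i" and t: "t \<notin> G" "t \<in># \<alpha>" "t \<in> {1..n}"
    and u: "\<alpha> - add_mset t (mset_set G) \<in> I"
  shows "insert t G \<in> kface n I \<alpha> (Suc i)"
proof -
  note fp = face_props[OF G]
  have M: "mset_set (insert t G) = add_mset t (mset_set G)" using fp(2) t(1) by simp
  have "mset_set (insert t G) \<subseteq># \<alpha>" using fp(2,4) t(2) by (auto simp: ms_sub_iff)
  moreover have "card (insert t G) = Suc i" using fp(2,3) t(1) by simp
  ultimately show ?thesis using fp(1) t u M unfolding kface_def by auto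
qed

lemma ins_face_D:
  assumes "insert t G \<in> kface n I \<alpha> (Suc i)" "t \<notin> G"
  shows "\<alpha> - add_mset t (mset_set G) \<in> I"
proof -
  have "finite G" using face_props(2)[OF assms(1)] by simp
  then show ?thesis using face_props(5)[OF assms(1)] assms(2) by simp
qed

lemma face_swap:
  assumes mu: "set_mset \<mu> \<subseteq> {1..n}" and al: "set_mset \<alpha> \<subseteq> {1..n}"
    and G: "G \<in> kface n (Borel n \<mu>) \<alpha> i" and t: "tv \<alpha> \<notin> G" and j: "j \<notin> G" "j \<noteq> tv \<alpha>"
    and J: "insert j G \<in> kface n (Borel n \<mu>) \<alpha> (Suc i)"
  shows "insert (tv \<alpha>) G \<in> kface n (Borel n \<mu>) \<alpha> (Suc i)"
proof -
  define t where "t = tv \<alpha>"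
  note fp = face_props[OF G]
  note fj = face_props[OF J]
  have ja: "j \<in># \<alpha>" using fj(2,4) by (auto simp: ms_sub_iff)
  then have ane: "\<alpha> \<noteq> {#}" by auto
  have ta: "t \<in># \<alpha>" using tv_in[OF ane] t_def by simp
  have jt: "j < t" using tv_max[OF ja] j(2) t_def by simp
  have j1: "1 \<le> j" using ja al by auto
  define MG where "MG = mset_set G"
  define u where "u = \<alpha> - add_mset j MG"
  have uI: "u \<in> Borel n \<mu>" using ins_face_D[OF J j(1)] u_def MG_def by simp
  have subj: "add_mset j MG \<subseteq># \<alpha>" using fj(4) fp(2) j(1) MG_def by simp
  have MGt: "count MG t = 0" using fp(2) t t_def MG_def by (simp add: count_ms)
  have "count u t = count \<alpha> t" using MGt jt u_def by auto
  then have tu: "t \<in># u" using ta by (metis count_greater_zero_iff)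
  have mv: "u - {#t#} + {#j#} \<in> Borel n \<mu>" using Borel.move[OF uI tu j1 jt] .
  have eq: "u - {#t#} + {#j#} = \<alpha> - add_mset t MG"
  proof (rule multiset_eqI)
    fix x
    have c1: "count MG x + (if x = j then 1 else 0) \<le> count \<alpha> x"
      using subj by (auto simp: subseteq_mset_def split: if_splits dest: spec[of _ x])
    have c2: "0 < count \<alpha> t" using ta by simp
    show "count (u - {#t#} + {#j#}) x = count (\<alpha> - add_mset t MG) x"
      using c1 c2 MGt jt unfolding u_def by (cases "x = t") auto
  qed
  have "t \<in> {1..n}" using ta al by auto
  then show ?thesis using ins_face[OF G t[folded t_def] ta] mv eq MG_def t_def by simp
qed

lemma face_ext_iff:
  assumes mu: "set_mset \<mu> \<subseteq> {1..n}" and al: "set_mset \<alpha> \<subseteq> {1..n}" and ane: "\<alpha> \<noteq> {#}"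
    and G: "G \<in> kface n (Borel n \<mu>) \<alpha> i" and t: "tv \<alpha> \<notin> G"
  shows "insert (tv \<alpha>) G \<in> kface n (Borel n \<mu>) \<alpha> (Suc i) \<longleftrightarrow>
         \<alpha> - mset_set G \<notin> mingens (Borel n \<mu>)"
proof -
  define t where "t = tv \<alpha>"
  note fp = face_props[OF G]
  define MG where "MG = mset_set G"
  have ta: "t \<in># \<alpha>" using tv_in[OF ane] t_def by simp
  have MGt: "count MG t = 0" using fp(2) t t_def MG_def by (simp add: count_ms)
  have uI: "\<alpha> - MG \<in> Borel n \<mu>" using fp(5) MG_def by simp
  have ct: "count (\<alpha> - MG) t = count \<alpha> t" using MGt by simp
  have c2: "0 < count \<alpha> t" using ta by simp
  show ?thesis
  proof
    assume "insert (tv \<alpha>) G \<in> kface n (Borel n \<mu>) \<alpha> (Suc i)"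
    then have vI: "\<alpha> - add_mset t MG \<in> Borel n \<mu>" using ins_face_D t t_def MG_def by blast
    have sub: "\<alpha> - add_mset t MG \<subseteq># \<alpha> - MG" by (auto simp: subseteq_mset_def)
    have ne: "\<alpha> - add_mset t MG \<noteq> \<alpha> - MG"
    proof
      assume "\<alpha> - add_mset t MG = \<alpha> - MG"
      then have "count (\<alpha> - add_mset t MG) t = count (\<alpha> - MG) t" by simp
      then have "count \<alpha> t - Suc 0 = count \<alpha> t" using MGt by simp
      then show False using c2 by linarith
    qed
    show "\<alpha> - mset_set G \<notin> mingens (Borel n \<mu>)"
      using vI sub ne unfolding mingens_def MG_def by blast
  next
    assume nm: "\<alpha> - mset_set G \<notin> mingens (Borel n \<mu>)"
    have tu: "t \<in># \<alpha> - MG" using ct c2 by (metis count_greater_zero_iff)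
    have mx: "\<forall>x\<in>#\<alpha> - MG. x \<le> t" using t_def by (auto dest: in_diffD intro: tv_max)
    have "\<alpha> - MG - {#t#} \<in> Borel n \<mu>" using stable[OF mu uI _ tu mx] nm MG_def by simp
    moreover have "\<alpha> - MG - {#t#} = \<alpha> - add_mset t MG" by simp
    moreover have "t \<in> {1..n}" using ta al by auto
    ultimately show "insert (tv \<alpha>) G \<in> kface n (Borel n \<mu>) \<alpha> (Suc i)"
      using ins_face[OF G t[folded t_def] ta] MG_def t_def by simp
  qed
qed


lemma kdiff_0: "kdiff n I \<alpha> 0 c = 0"
  by (rule ext) (simp add: kdiff_def)

lemma kdiff_at: "G \<in> kface n I \<alpha> i \<Longrightarrow> kdiff n I \<alpha> (Suc i) c G =
   (\<Sum>j\<in>{1..n} - G. if insert j G \<in> kface n I \<alpha> (Suc i) then ksign j (insert j G) * c (insert j G) else 0)"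
  by (simp add: kdiff_def)

lemma kdiff_out: "G \<notin> kface n I \<alpha> i \<Longrightarrow> kdiff n I \<alpha> (Suc i) c G = 0"
  by (simp add: kdiff_def)

lemma kdiff_diff: "kdiff n I \<alpha> i (c - c') = kdiff n I \<alpha> i c - kdiff n I \<alpha> i c'"
  unfolding kdiff_def by (rule ext) (auto simp: sum_subtractf[symmetric] right_diff_distrib intro!: sum.cong)

lemma kdiff_add: "kdiff n I \<alpha> i (c + c') = kdiff n I \<alpha> i c + kdiff n I \<alpha> i c'"
  unfolding kdiff_def by (rule ext) (auto simp: sum.distrib[symmetric] distrib_left intro!: sum.cong)

lemma kdiff_scale: "kdiff n I \<alpha> i (\<lambda>x. r * c x) = (\<lambda>x. r * kdiff n I \<alpha> i c x)"
  unfolding kdiff_def by (rule ext) (auto simp: sum_distrib_left intro!: sum.cong)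

lemma kdiff_zero: "kdiff n I \<alpha> i 0 = 0"
  using kdiff_diff[of n I \<alpha> i 0 0] by simp

lemma kdiff_V: "kdiff n I \<alpha> (Suc i) c \<in> kchains n I \<alpha> i"
  unfolding kchains_def by (auto simp: kdiff_out)

lemma kchains_sub: "fvs.subspace (kchains n I \<alpha> i)"
  unfolding fvs.subspace_def kchains_def by auto

lemma face_finite: "finite (kface n I \<alpha> i)"
proof -
  have "kface n I \<alpha> i \<subseteq> Pow {1..n}" unfolding kface_def by auto
  then show ?thesis by (rule finite_subset) simp
qed

lemma ksign_nz: "ksign j F \<noteq> (0::'a::field)"
  by (simp add: ksign_def)

lemma ksign_sq: "ksign j F * ksign j F = (1::'a::field)"
  by (simp add: ksign_def power_mult_distrib[symmetric])

definition Tch :: "nat \<Rightarrow> mon set \<Rightarrow> mon \<Rightarrow> nat \<Rightarrow> (nat set \<Rightarrow> 'a::field) set" where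
  "Tch n I \<alpha> i = {x \<in> kchains n I \<alpha> i. \<forall>H. tv \<alpha> \<notin> H \<longrightarrow> x H = 0}"

lemma d_T_at:
  assumes x: "\<forall>H. tv \<alpha> \<notin> H \<longrightarrow> x H = 0" and G: "G \<in> kface n I \<alpha> i" and t: "tv \<alpha> \<notin> G"
  shows "kdiff n I \<alpha> (Suc i) x G = (if insert (tv \<alpha>) G \<in> kface n I \<alpha> (Suc i)
           then ksign (tv \<alpha>) (insert (tv \<alpha>) G) * x (insert (tv \<alpha>) G) else 0)"
proof -
  define t where "t = tv \<alpha>"
  have "kdiff n I \<alpha> (Suc i) x G = (\<Sum>j\<in>{1..n} - G. if insert j G \<in> kface n I \<alpha> (Suc i) then ksign j (insert j G) * x (insert j G) else 0)"
    using G by (rule kdiff_at)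
  also have "\<dots> = (\<Sum>j\<in>{1..n} - G. if j = t then (if insert t G \<in> kface n I \<alpha> (Suc i) then ksign t (insert t G) * x (insert t G) else 0) else 0)"
    using x t t_def by (intro sum.cong) auto
  also have "\<dots> = (if t \<in> {1..n} - G then (if insert t G \<in> kface n I \<alpha> (Suc i) then ksign t (insert t G) * x (insert t G) else 0) else 0)"
    by (simp add: sum.delta)
  also have "\<dots> = (if insert t G \<in> kface n I \<alpha> (Suc i) then ksign t (insert t G) * x (insert t G) else 0)"
    using face_props(1)[of "insert t G" n I \<alpha> "Suc i"] t t_def by auto
  finally show ?thesis using t_def by simp
qed

context
  fixes n :: nat and \<mu> \<alpha> :: mon
  assumes mu: "set_mset \<mu> \<subseteq> {1..n}" and al: "set_mset \<alpha> \<subseteq> {1..n}"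
begin

lemma T_inj:
  assumes x: "x \<in> Tch n (Borel n \<mu>) \<alpha> i" and dx: "kdiff n (Borel n \<mu>) \<alpha> i x = 0"
  shows "x = 0"
proof (rule ext)
  fix H
  have xV: "\<forall>F. F \<notin> kface n (Borel n \<mu>) \<alpha> i \<longrightarrow> x F = 0" and xT: "\<forall>H. tv \<alpha> \<notin> H \<longrightarrow> x H = 0"
    using x by (auto simp: Tch_def kchains_def)
  show "x H = 0 H"
  proof (cases "H \<in> kface n (Borel n \<mu>) \<alpha> i \<and> tv \<alpha> \<in> H")
    case False then show ?thesis using xV xT by auto
  next
    case True
    then have HF: "H \<in> kface n (Borel n \<mu>) \<alpha> i" and tH: "tv \<alpha> \<in> H" by auto
    show ?thesis
    proof (cases i)
      case 0
      then have "H = {}" using face_props(2,3)[OF HF] by simp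
      then show ?thesis using tH by simp
    next
      case (Suc i')
      define G where "G = H - {tv \<alpha>}"
      have GF: "G \<in> kface n (Borel n \<mu>) \<alpha> i'" using face_del[of H n \<mu> \<alpha> i' "tv \<alpha>"] HF Suc tH G_def by simp
      have tG: "tv \<alpha> \<notin> G" and HG: "insert (tv \<alpha>) G = H" using tH G_def by auto
      have "kdiff n (Borel n \<mu>) \<alpha> (Suc i') x G = ksign (tv \<alpha>) H * x H"
        using d_T_at[OF xT GF tG] HG HF Suc by simp
      then have "ksign (tv \<alpha>) H * x H = 0" using dx Suc by simp
      then show ?thesis by (simp add: ksign_def)
    qed
  qed
qed

end


lemma dd:
  fixes c :: "nat set \<Rightarrow> 'a::field"
  shows "kdiff n (Borel n \<mu>) \<alpha> i (kdiff n (Borel n \<mu>) \<alpha> (Suc i) c) = 0"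
proof (cases i)
  case 0 then show ?thesis by (simp add: kdiff_0)
next
  case (Suc i')
  show ?thesis
  proof (rule ext)
    fix K
    show "kdiff n (Borel n \<mu>) \<alpha> i (kdiff n (Borel n \<mu>) \<alpha> (Suc i) c) K = 0 K"
    proof (cases "K \<in> kface n (Borel n \<mu>) \<alpha> i'")
      case False then show ?thesis using Suc by (simp add: kdiff_out)
    next
      case True
      define \<Phi> where "\<Phi> = kface n (Borel n \<mu>) \<alpha>"
      define A where "A = {1..n} - K"
      have finA: "finite A" unfolding A_def by simp
      have finK: "finite K" using face_props(2)[OF True] .
      define g where "g j l = (if insert l (insert j K) \<in> \<Phi> (Suc (Suc i'))
          then ksign j (insert j K) * (ksign l (insert l (insert j K)) * c (insert l (insert j K))) else (0::'a))" for j l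
      have outer: "kdiff n (Borel n \<mu>) \<alpha> (Suc i') X K =
          (\<Sum>j\<in>A. if insert j K \<in> \<Phi> (Suc i') then ksign j (insert j K) * X (insert j K) else 0)" for X :: "nat set \<Rightarrow> 'a"
        using True unfolding A_def \<Phi>_def by (rule kdiff_at)
      have step1: "(if insert j K \<in> \<Phi> (Suc i') then ksign j (insert j K) * kdiff n (Borel n \<mu>) \<alpha> (Suc (Suc i')) c (insert j K) else 0)
          = (\<Sum>l\<in>A - {j}. g j l)" if jA: "j \<in> A" for j
      proof (cases "insert j K \<in> \<Phi> (Suc i')")
        case True
        have e: "{1..n} - insert j K = A - {j}" unfolding A_def by auto
        have "kdiff n (Borel n \<mu>) \<alpha> (Suc (Suc i')) c (insert j K) =
           (\<Sum>l\<in>A - {j}. if insert l (insert j K) \<in> \<Phi> (Suc (Suc i')) then ksign l (insert l (insert j K)) * c (insert l (insert j K)) else 0)"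
          using kdiff_at[of "insert j K" n "Borel n \<mu>" \<alpha> "Suc i'" c] True unfolding \<Phi>_def e by simp
        then have "(if insert j K \<in> \<Phi> (Suc i') then ksign j (insert j K) * kdiff n (Borel n \<mu>) \<alpha> (Suc (Suc i')) c (insert j K) else 0)
           = ksign j (insert j K) * (\<Sum>l\<in>A - {j}. if insert l (insert j K) \<in> \<Phi> (Suc (Suc i')) then ksign l (insert l (insert j K)) * c (insert l (insert j K)) else 0)"
          using True by simp
        also have "\<dots> = (\<Sum>l\<in>A - {j}. ksign j (insert j K) * (if insert l (insert j K) \<in> \<Phi> (Suc (Suc i')) then ksign l (insert l (insert j K)) * c (insert l (insert j K)) else 0))"
          by (rule sum_distrib_left)
        also have "\<dots> = (\<Sum>l\<in>A - {j}. g j l)"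
        proof (rule sum.cong[OF refl])
          fix l
          show "ksign j (insert j K) * (if insert l (insert j K) \<in> \<Phi> (Suc (Suc i')) then ksign l (insert l (insert j K)) * c (insert l (insert j K)) else 0) = g j l"
            unfolding g_def by (cases "insert l (insert j K) \<in> \<Phi> (Suc (Suc i'))") simp_all
        qed
        finally show ?thesis .
      next
        case False
        have "g j l = 0" if lA: "l \<in> A - {j}" for l
        proof (rule ccontr)
          assume "g j l \<noteq> 0"
          then have F: "insert l (insert j K) \<in> \<Phi> (Suc (Suc i'))" unfolding g_def by (auto split: if_splits)
          have "insert l (insert j K) - {l} = insert j K" using lA jA unfolding A_def by auto
          then have "insert j K \<in> \<Phi> (Suc i')" using face_del[of "insert l (insert j K)" n \<mu> \<alpha> "Suc i'" l] F unfolding \<Phi>_def by simp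
          then show False using False by simp
        qed
        then show ?thesis using False by simp
      qed
      have anti: "g l j = - g j l" if "j \<in> A" "l \<in> A" "j < l" for j l
      proof -
        have jK: "j \<notin> K" and lK: "l \<notin> K" using that unfolding A_def by auto
        have s1: "{x \<in> insert j K. x < j} = {x \<in> K. x < j}" by auto
        have s2: "{x \<in> insert l (insert j K). x < l} = insert j {x \<in> K. x < l}" using that by auto
        have s3: "{x \<in> insert l K. x < l} = {x \<in> K. x < l}" by auto
        have s4: "{x \<in> insert j (insert l K). x < j} = {x \<in> K. x < j}" using that by auto
        have c2: "card (insert j {x \<in> K. x < l}) = Suc (card {x \<in> K. x < l})" using jK finK by simp
        have ic: "insert j (insert l K) = insert l (insert j K)" by auto
        show ?thesis unfolding g_def ksign_def using s1 s2 s3 s4 c2 ic by simp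
      qed
      have step2: "(\<Sum>j\<in>A. \<Sum>l\<in>A - {j}. g j l) = 0"
      proof -
        have sp: "(\<Sum>l\<in>A - {j}. g j l) = (\<Sum>l\<in>{l\<in>A. j < l}. g j l) + (\<Sum>l\<in>{l\<in>A. l < j}. g j l)" for j
        proof -
          have e: "A - {j} = {l\<in>A. j < l} \<union> {l\<in>A. l < j}" by auto
          have "(\<Sum>l\<in>{l\<in>A. j < l} \<union> {l\<in>A. l < j}. g j l) = (\<Sum>l\<in>{l\<in>A. j < l}. g j l) + (\<Sum>l\<in>{l\<in>A. l < j}. g j l)"
            by (rule sum.union_disjoint) (use finA in auto)
          then show ?thesis by (simp only: e)
        qed
        have sw: "(\<Sum>j\<in>A. \<Sum>l\<in>{l\<in>A. l < j}. g j l) = (\<Sum>l\<in>A. \<Sum>j\<in>{j\<in>A. l < j}. g j l)"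
          by (rule sum.swap_restrict[OF finA finA])
        have "(\<Sum>j\<in>A. \<Sum>l\<in>A - {j}. g j l) = (\<Sum>j\<in>A. \<Sum>l\<in>{l\<in>A. j < l}. g j l) + (\<Sum>j\<in>A. \<Sum>l\<in>{l\<in>A. l < j}. g j l)"
          by (simp add: sp sum.distrib)
        also have "\<dots> = (\<Sum>j\<in>A. \<Sum>l\<in>{l\<in>A. j < l}. g j l) + (\<Sum>j\<in>A. \<Sum>l\<in>{l\<in>A. j < l}. g l j)"
          using sw by simp
        also have "\<dots> = (\<Sum>j\<in>A. \<Sum>l\<in>{l\<in>A. j < l}. g j l + g l j)"
          by (simp add: sum.distrib)
        also have "\<dots> = 0" using anti by (intro sum.neutral ballI) auto
        finally show ?thesis .
      qed
      have "kdiff n (Borel n \<mu>) \<alpha> i (kdiff n (Borel n \<mu>) \<alpha> (Suc i) c) K =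
          (\<Sum>j\<in>A. if insert j K \<in> \<Phi> (Suc i') then ksign j (insert j K) * kdiff n (Borel n \<mu>) \<alpha> (Suc (Suc i')) c (insert j K) else 0)"
        using outer Suc by simp
      also have "\<dots> = (\<Sum>j\<in>A. \<Sum>l\<in>A - {j}. g j l)" using step1 by (intro sum.cong) auto
      finally show ?thesis using step2 by simp
    qed
  qed
qed


context
  fixes n :: nat and \<mu> \<alpha> :: mon
  assumes mu: "set_mset \<mu> \<subseteq> {1..n}" and al: "set_mset \<alpha> \<subseteq> {1..n}"
begin

lemma b_surj:
  fixes c :: "nat set \<Rightarrow> 'a::field"
  assumes c: "c \<in> kchains n (Borel n \<mu>) \<alpha> (Suc i)"
  shows "\<exists>x. x \<in> Tch n (Borel n \<mu>) \<alpha> (Suc i) \<and> kdiff n (Borel n \<mu>) \<alpha> (Suc i) c = kdiff n (Borel n \<mu>) \<alpha> (Suc i) x"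
proof -
  define \<Phi> where "\<Phi> = kface n (Borel n \<mu>) \<alpha>"
  define t where "t = tv \<alpha>"
  define d :: "(nat set \<Rightarrow> 'a) \<Rightarrow> nat set \<Rightarrow> 'a" where "d = kdiff n (Borel n \<mu>) \<alpha> (Suc i)"
  define x where "x H = (if H \<in> \<Phi> (Suc i) \<and> t \<in> H then ksign t H * d c (H - {t}) else 0)" for H
  have xT: "x \<in> Tch n (Borel n \<mu>) \<alpha> (Suc i)"
    unfolding Tch_def kchains_def x_def \<Phi>_def t_def by auto
  have xT': "\<forall>H. tv \<alpha> \<notin> H \<longrightarrow> x H = 0" unfolding x_def t_def by auto
  define e where "e = d c - d x"
  have eV: "e \<in> kchains n (Borel n \<mu>) \<alpha> i"
    unfolding e_def d_def using fvs.subspace_diff[OF kchains_sub kdiff_V kdiff_V] .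
  have e0: "e G = 0" if tG: "t \<notin> G" for G
  proof (cases "G \<in> \<Phi> i")
    case False then show ?thesis unfolding e_def d_def \<Phi>_def by (simp add: kdiff_out)
  next
    case True
    have dx: "d x G = (if insert t G \<in> \<Phi> (Suc i) then ksign t (insert t G) * x (insert t G) else 0)"
      unfolding d_def \<Phi>_def t_def by (rule d_T_at[OF xT' True[unfolded \<Phi>_def] tG[unfolded t_def]])
    show ?thesis
    proof (cases "insert t G \<in> \<Phi> (Suc i)")
      case True
      have "insert t G - {t} = G" using tG by auto
      then have "x (insert t G) = ksign t (insert t G) * d c G" unfolding x_def using True by simp
      then have "d x G = d c G" using dx True by (simp add: mult.assoc[symmetric] ksign_sq)
      then show ?thesis unfolding e_def by simp
    next
      case False
      have "d c G = (\<Sum>j\<in>{1..n} - G. if insert j G \<in> \<Phi> (Suc i) then ksign j (insert j G) * c (insert j G) else 0)"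
        unfolding d_def \<Phi>_def using True[unfolded \<Phi>_def] by (rule kdiff_at)
      also have "\<dots> = 0"
      proof (rule sum.neutral, rule ballI)
        fix j assume j: "j \<in> {1..n} - G"
        have "insert j G \<notin> \<Phi> (Suc i)"
        proof
          assume J: "insert j G \<in> \<Phi> (Suc i)"
          show False
          proof (cases "j = t")
            case True then show False using J False by simp
          next
            case jt: False
            have "insert (tv \<alpha>) G \<in> kface n (Borel n \<mu>) \<alpha> (Suc i)"
              using face_swap[OF mu al, of G i j] True J jt j tG unfolding \<Phi>_def t_def by auto
            then show False using False unfolding \<Phi>_def t_def by simp
          qed
        qed
        then show "(if insert j G \<in> \<Phi> (Suc i) then ksign j (insert j G) * c (insert j G) else 0) = 0" by simp
      qed
      finally show ?thesis unfolding e_def using dx False by simp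
    qed
  qed
  have eT: "e \<in> Tch n (Borel n \<mu>) \<alpha> i" using eV e0 unfolding Tch_def t_def by auto
  have "kdiff n (Borel n \<mu>) \<alpha> i e = 0"
    unfolding e_def d_def by (simp add: kdiff_diff dd)
  then have "e = 0" using T_inj[OF mu al eT] by simp
  then show ?thesis using xT unfolding e_def d_def by auto
qed

lemma ker_dim:
  fixes T :: "'a::field itself"
  shows "fvs.dim {c \<in> kchains n (Borel n \<mu>) \<alpha> i. kdiff n (Borel n \<mu>) \<alpha> i c = (0 :: nat set \<Rightarrow> 'a::field)}
    = card {G \<in> kface n (Borel n \<mu>) \<alpha> i. tv \<alpha> \<notin> G}"
proof (rule dim_restr)
  show "finite {G \<in> kface n (Borel n \<mu>) \<alpha> i. tv \<alpha> \<notin> G}" using face_finite by simp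
next
  show "fvs.subspace {c \<in> kchains n (Borel n \<mu>) \<alpha> i. kdiff n (Borel n \<mu>) \<alpha> i c = (0 :: nat set \<Rightarrow> 'a)}"
    unfolding fvs.subspace_def
  proof (intro conjI ballI allI)
    show "0 \<in> {c \<in> kchains n (Borel n \<mu>) \<alpha> i. kdiff n (Borel n \<mu>) \<alpha> i c = (0 :: nat set \<Rightarrow> 'a)}"
      using kdiff_zero fvs.subspace_0[OF kchains_sub] by auto
  next
    fix x y assume "x \<in> {c \<in> kchains n (Borel n \<mu>) \<alpha> i. kdiff n (Borel n \<mu>) \<alpha> i c = (0 :: nat set \<Rightarrow> 'a)}"
      "y \<in> {c \<in> kchains n (Borel n \<mu>) \<alpha> i. kdiff n (Borel n \<mu>) \<alpha> i c = (0 :: nat set \<Rightarrow> 'a)}"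
    then show "x + y \<in> {c \<in> kchains n (Borel n \<mu>) \<alpha> i. kdiff n (Borel n \<mu>) \<alpha> i c = 0}"
      using fvs.subspace_add[OF kchains_sub] by (auto simp: kdiff_add)
  next
    fix r :: 'a and x assume "x \<in> {c \<in> kchains n (Borel n \<mu>) \<alpha> i. kdiff n (Borel n \<mu>) \<alpha> i c = (0 :: nat set \<Rightarrow> 'a)}"
    then show "(\<lambda>y. r * x y) \<in> {c \<in> kchains n (Borel n \<mu>) \<alpha> i. kdiff n (Borel n \<mu>) \<alpha> i c = 0}"
      using fvs.subspace_scale[OF kchains_sub] by (auto simp: kdiff_scale fun_eq_iff)
  qed
next
  fix u :: "nat set \<Rightarrow> 'a"
  assume u: "u \<in> {c \<in> kchains n (Borel n \<mu>) \<alpha> i. kdiff n (Borel n \<mu>) \<alpha> i c = 0}"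
    and z: "\<forall>G\<in>{G \<in> kface n (Borel n \<mu>) \<alpha> i. tv \<alpha> \<notin> G}. u G = 0"
  have "u \<in> Tch n (Borel n \<mu>) \<alpha> i" using u z unfolding Tch_def kchains_def by auto
  then show "u = 0" using T_inj[OF mu al] u by auto
next
  fix G assume G: "G \<in> {G \<in> kface n (Borel n \<mu>) \<alpha> i. tv \<alpha> \<notin> G}"
  define r :: "nat set \<Rightarrow> 'a" where "r H = (if H = G then 1 else 0)" for H
  have rV: "r \<in> kchains n (Borel n \<mu>) \<alpha> i" using G unfolding kchains_def r_def by auto
  show "\<exists>u\<in>{c \<in> kchains n (Borel n \<mu>) \<alpha> i. kdiff n (Borel n \<mu>) \<alpha> i c = (0 :: nat set \<Rightarrow> 'a)}.
          \<forall>G'\<in>{G \<in> kface n (Borel n \<mu>) \<alpha> i. tv \<alpha> \<notin> G}. u G' = (if G' = G then 1 else 0)"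
  proof (cases i)
    case 0
    have "r \<in> {c \<in> kchains n (Borel n \<mu>) \<alpha> i. kdiff n (Borel n \<mu>) \<alpha> i c = 0}" using rV 0 by (simp add: kdiff_0)
    moreover have "\<forall>G'\<in>{G \<in> kface n (Borel n \<mu>) \<alpha> i. tv \<alpha> \<notin> G}. r G' = (if G' = G then 1 else 0)" by (simp add: r_def)
    ultimately show ?thesis by (intro bexI[where x = r])
  next
    case (Suc i')
    obtain x where x: "x \<in> Tch n (Borel n \<mu>) \<alpha> i" "kdiff n (Borel n \<mu>) \<alpha> i r = kdiff n (Borel n \<mu>) \<alpha> i x"
      using b_surj[of r i'] rV Suc by auto
    have uV: "r - x \<in> kchains n (Borel n \<mu>) \<alpha> i"
      using fvs.subspace_diff[OF kchains_sub rV] x(1) unfolding Tch_def by auto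
    have "kdiff n (Borel n \<mu>) \<alpha> i (r - x) = 0" using x(2) by (simp add: kdiff_diff)
    moreover have "\<forall>G'\<in>{G \<in> kface n (Borel n \<mu>) \<alpha> i. tv \<alpha> \<notin> G}. (r - x) G' = (if G' = G then 1 else 0)"
      using x(1) unfolding Tch_def r_def by auto
    ultimately show ?thesis using uV by (intro bexI[where x = "r - x"]) auto
  qed
qed

end


context
  fixes n :: nat and \<mu> \<alpha> :: mon
  assumes mu: "set_mset \<mu> \<subseteq> {1..n}" and al: "set_mset \<alpha> \<subseteq> {1..n}"
begin

lemma im_dim:
  fixes T :: "'a::field itself"
  shows "fvs.dim (kdiff n (Borel n \<mu>) \<alpha> (Suc i) ` (kchains n (Borel n \<mu>) \<alpha> (Suc i) :: (nat set \<Rightarrow> 'a) set))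
    = card {G \<in> kface n (Borel n \<mu>) \<alpha> i. tv \<alpha> \<notin> G \<and> insert (tv \<alpha>) G \<in> kface n (Borel n \<mu>) \<alpha> (Suc i)}"
proof (rule dim_restr)
  show "finite {G \<in> kface n (Borel n \<mu>) \<alpha> i. tv \<alpha> \<notin> G \<and> insert (tv \<alpha>) G \<in> kface n (Borel n \<mu>) \<alpha> (Suc i)}"
    using face_finite by simp
next
  show "fvs.subspace (kdiff n (Borel n \<mu>) \<alpha> (Suc i) ` (kchains n (Borel n \<mu>) \<alpha> (Suc i) :: (nat set \<Rightarrow> 'a) set))"
    unfolding fvs.subspace_def
  proof (intro conjI ballI allI)
    show "0 \<in> kdiff n (Borel n \<mu>) \<alpha> (Suc i) ` (kchains n (Borel n \<mu>) \<alpha> (Suc i) :: (nat set \<Rightarrow> 'a) set)"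
      using kdiff_zero fvs.subspace_0[OF kchains_sub] by (metis image_eqI)
  next
    fix x y assume "x \<in> kdiff n (Borel n \<mu>) \<alpha> (Suc i) ` (kchains n (Borel n \<mu>) \<alpha> (Suc i) :: (nat set \<Rightarrow> 'a) set)"
      "y \<in> kdiff n (Borel n \<mu>) \<alpha> (Suc i) ` (kchains n (Borel n \<mu>) \<alpha> (Suc i) :: (nat set \<Rightarrow> 'a) set)"
    then obtain a b where ab: "a \<in> kchains n (Borel n \<mu>) \<alpha> (Suc i)" "b \<in> kchains n (Borel n \<mu>) \<alpha> (Suc i)"
      "x = kdiff n (Borel n \<mu>) \<alpha> (Suc i) a" "y = kdiff n (Borel n \<mu>) \<alpha> (Suc i) b" by auto
    then have "x + y = kdiff n (Borel n \<mu>) \<alpha> (Suc i) (a + b)" by (simp add: kdiff_add)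
    moreover have "a + b \<in> kchains n (Borel n \<mu>) \<alpha> (Suc i)" using fvs.subspace_add[OF kchains_sub ab(1,2)] .
    ultimately show "x + y \<in> kdiff n (Borel n \<mu>) \<alpha> (Suc i) ` (kchains n (Borel n \<mu>) \<alpha> (Suc i) :: (nat set \<Rightarrow> 'a) set)"
      by blast
  next
    fix r :: 'a and x assume "x \<in> kdiff n (Borel n \<mu>) \<alpha> (Suc i) ` (kchains n (Borel n \<mu>) \<alpha> (Suc i) :: (nat set \<Rightarrow> 'a) set)"
    then obtain a where a: "a \<in> kchains n (Borel n \<mu>) \<alpha> (Suc i)" "x = kdiff n (Borel n \<mu>) \<alpha> (Suc i) a" by auto
    then have "(\<lambda>y. r * x y) = kdiff n (Borel n \<mu>) \<alpha> (Suc i) (\<lambda>y. r * a y)" by (simp add: kdiff_scale)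
    moreover have "(\<lambda>y. r * a y) \<in> kchains n (Borel n \<mu>) \<alpha> (Suc i)" using fvs.subspace_scale[OF kchains_sub a(1)] .
    ultimately show "(\<lambda>y. r * x y) \<in> kdiff n (Borel n \<mu>) \<alpha> (Suc i) ` (kchains n (Borel n \<mu>) \<alpha> (Suc i) :: (nat set \<Rightarrow> 'a) set)"
      by blast
  qed
next
  fix u :: "nat set \<Rightarrow> 'a"
  assume u: "u \<in> kdiff n (Borel n \<mu>) \<alpha> (Suc i) ` kchains n (Borel n \<mu>) \<alpha> (Suc i)"
    and z: "\<forall>G\<in>{G \<in> kface n (Borel n \<mu>) \<alpha> i. tv \<alpha> \<notin> G \<and> insert (tv \<alpha>) G \<in> kface n (Borel n \<mu>) \<alpha> (Suc i)}. u G = 0"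
  obtain c where c: "c \<in> kchains n (Borel n \<mu>) \<alpha> (Suc i)" "u = kdiff n (Borel n \<mu>) \<alpha> (Suc i) c" using u by auto
  obtain x where x: "x \<in> Tch n (Borel n \<mu>) \<alpha> (Suc i)" "kdiff n (Borel n \<mu>) \<alpha> (Suc i) c = kdiff n (Borel n \<mu>) \<alpha> (Suc i) x"
    using b_surj[OF mu al c(1)] by auto
  have xV: "\<forall>F. F \<notin> kface n (Borel n \<mu>) \<alpha> (Suc i) \<longrightarrow> x F = 0" and xT: "\<forall>H. tv \<alpha> \<notin> H \<longrightarrow> x H = 0"
    using x(1) by (auto simp: Tch_def kchains_def)
  have "x = 0"
  proof (rule ext)
    fix H
    show "x H = 0 H"
    proof (cases "H \<in> kface n (Borel n \<mu>) \<alpha> (Suc i) \<and> tv \<alpha> \<in> H")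
      case False then show ?thesis using xV xT by auto
    next
      case True
      define G where "G = H - {tv \<alpha>}"
      have GF: "G \<in> kface n (Borel n \<mu>) \<alpha> i" using face_del[of H n \<mu> \<alpha> i "tv \<alpha>"] True G_def by simp
      have tG: "tv \<alpha> \<notin> G" and HG: "insert (tv \<alpha>) G = H" using True G_def by auto
      have "u G = 0" using z GF tG HG True by auto
      moreover have "u G = ksign (tv \<alpha>) H * x H"
        using d_T_at[OF xT GF tG] HG True c(2) x(2) by simp
      ultimately show ?thesis by (simp add: ksign_def)
    qed
  qed
  then show "u = 0" using c(2) x(2) by (simp add: kdiff_zero)
next
  fix G assume G: "G \<in> {G \<in> kface n (Borel n \<mu>) \<alpha> i. tv \<alpha> \<notin> G \<and> insert (tv \<alpha>) G \<in> kface n (Borel n \<mu>) \<alpha> (Suc i)}"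
  define x :: "nat set \<Rightarrow> 'a" where "x H = (if H = insert (tv \<alpha>) G then ksign (tv \<alpha>) H else 0)" for H
  have xV: "x \<in> kchains n (Borel n \<mu>) \<alpha> (Suc i)" using G unfolding kchains_def x_def by auto
  have xT: "\<forall>H. tv \<alpha> \<notin> H \<longrightarrow> x H = 0" unfolding x_def by auto
  have "\<forall>G'\<in>{G \<in> kface n (Borel n \<mu>) \<alpha> i. tv \<alpha> \<notin> G \<and> insert (tv \<alpha>) G \<in> kface n (Borel n \<mu>) \<alpha> (Suc i)}.
          kdiff n (Borel n \<mu>) \<alpha> (Suc i) x G' = (if G' = G then 1 else 0)"
  proof
    fix G' assume G': "G' \<in> {G \<in> kface n (Borel n \<mu>) \<alpha> i. tv \<alpha> \<notin> G \<and> insert (tv \<alpha>) G \<in> kface n (Borel n \<mu>) \<alpha> (Suc i)}"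
    have e: "kdiff n (Borel n \<mu>) \<alpha> (Suc i) x G' = ksign (tv \<alpha>) (insert (tv \<alpha>) G') * x (insert (tv \<alpha>) G')"
      using d_T_at[OF xT, of G' n "Borel n \<mu>" i] G' by simp
    have "tv \<alpha> \<notin> G" "tv \<alpha> \<notin> G'" using G G' by auto
    then have "insert (tv \<alpha>) G' = insert (tv \<alpha>) G \<longleftrightarrow> G' = G" by (simp add: insert_ident)
    then show "kdiff n (Borel n \<mu>) \<alpha> (Suc i) x G' = (if G' = G then 1 else 0)"
      using e unfolding x_def by (auto simp: ksign_sq)
  qed
  then show "\<exists>u\<in>kdiff n (Borel n \<mu>) \<alpha> (Suc i) ` (kchains n (Borel n \<mu>) \<alpha> (Suc i) :: (nat set \<Rightarrow> 'a) set).
          \<forall>G'\<in>{G \<in> kface n (Borel n \<mu>) \<alpha> i. tv \<alpha> \<notin> G \<and> insert (tv \<alpha>) G \<in> kface n (Borel n \<mu>) \<alpha> (Suc i)}.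
            u G' = (if G' = G then 1 else 0)"
    using xV by (intro bexI[where x = "kdiff n (Borel n \<mu>) \<alpha> (Suc i) x"]) auto
qed

lemma khomdim_eq:
  fixes T :: "'a::field itself"
  shows "khomdim T n (Borel n \<mu>) \<alpha> i =
    card {G \<in> kface n (Borel n \<mu>) \<alpha> i. tv \<alpha> \<notin> G \<and> insert (tv \<alpha>) G \<notin> kface n (Borel n \<mu>) \<alpha> (Suc i)}"
proof -
  define R where "R = {G \<in> kface n (Borel n \<mu>) \<alpha> i. tv \<alpha> \<notin> G}"
  define Y where "Y = {G \<in> kface n (Borel n \<mu>) \<alpha> i. tv \<alpha> \<notin> G \<and> insert (tv \<alpha>) G \<in> kface n (Borel n \<mu>) \<alpha> (Suc i)}"
  have "khomdim T n (Borel n \<mu>) \<alpha> i = card R - card Y"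
    unfolding khomdim_def R_def Y_def using ker_dim[OF mu al, where 'a='a, of i] im_dim[where 'a='a, of i] by simp
  also have "\<dots> = card (R - Y)"
    by (rule card_Diff_subset[symmetric]) (auto simp: R_def Y_def intro: finite_subset[OF _ face_finite])
  also have "R - Y = {G \<in> kface n (Borel n \<mu>) \<alpha> i. tv \<alpha> \<notin> G \<and> insert (tv \<alpha>) G \<notin> kface n (Borel n \<mu>) \<alpha> (Suc i)}"
    unfolding R_def Y_def by auto
  finally show ?thesis .
qed

end


definition Msup :: "mon \<Rightarrow> nat" where
  "Msup g = Max (insert 1 (set_mset g))"

definition Fs :: "nat \<Rightarrow> mon \<Rightarrow> nat \<Rightarrow> nat set set" where
  "Fs n g i = {F. F \<subseteq> {1..n} \<and> card F = i \<and> (\<forall>x\<in>F. \<exists>y\<in>#g. x < y)}"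

definition Eset :: "nat \<Rightarrow> mon set \<Rightarrow> mon \<Rightarrow> nat \<Rightarrow> nat set set" where
  "Eset n I \<alpha> i = {F. mset_set F \<subseteq># \<alpha> \<and> F \<in> Fs n (\<alpha> - mset_set F) i \<and> \<alpha> - mset_set F \<in> mingens I}"

lemma mingens_sub: "mingens I \<subseteq> I" unfolding mingens_def by auto

lemma khom_E:
  fixes T :: "'a::field itself"
  assumes mu: "set_mset \<mu> \<subseteq> {1..n}" and al: "set_mset \<alpha> \<subseteq> {1..n}"
  shows "khomdim T n (Borel n \<mu>) \<alpha> i = card (Eset n (Borel n \<mu>) \<alpha> i)"
proof -
  have eq: "{G \<in> kface n (Borel n \<mu>) \<alpha> i. tv \<alpha> \<notin> G \<and> insert (tv \<alpha>) G \<notin> kface n (Borel n \<mu>) \<alpha> (Suc i)}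
      = Eset n (Borel n \<mu>) \<alpha> i"
  proof (cases "\<alpha> = {#}")
    case True
    have tv0: "tv \<alpha> = 0" using True by (simp add: tv_def)
    show ?thesis
    proof (intro set_eqI iffI)
      fix F assume F: "F \<in> {G \<in> kface n (Borel n \<mu>) \<alpha> i. tv \<alpha> \<notin> G \<and> insert (tv \<alpha>) G \<notin> kface n (Borel n \<mu>) \<alpha> (Suc i)}"
      then have FF: "F \<in> kface n (Borel n \<mu>) \<alpha> i" by simp
      note fp = face_props[OF FF]
      have "mset_set F = {#}" using fp(4) True by simp
      then have F0: "F = {}" using fp(2) by (simp add: mset_set_empty_iff)
      have "{#} \<in> Borel n \<mu>" using fp(5) True by simp
      then have "{#} \<in> mingens (Borel n \<mu>)" unfolding mingens_def by auto
      then show "F \<in> Eset n (Borel n \<mu>) \<alpha> i" using F0 True fp(3) unfolding Eset_def Fs_def by auto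
    next
      fix F assume F: "F \<in> Eset n (Borel n \<mu>) \<alpha> i"
      then have fin: "finite F" unfolding Eset_def Fs_def by (auto intro: finite_subset)
      have "mset_set F = {#}" using F True unfolding Eset_def by simp
      then have F0: "F = {}" using fin by (simp add: mset_set_empty_iff)
      have "{#} \<in> Borel n \<mu>" "i = 0" using F F0 True mingens_sub unfolding Eset_def Fs_def by auto
      then have "F \<in> kface n (Borel n \<mu>) \<alpha> i" using F0 True unfolding kface_def by simp
      moreover have "insert (tv \<alpha>) F \<notin> kface n (Borel n \<mu>) \<alpha> (Suc i)"
        using face_props(1)[of "insert (tv \<alpha>) F"] tv0 by auto
      ultimately show "F \<in> {G \<in> kface n (Borel n \<mu>) \<alpha> i. tv \<alpha> \<notin> G \<and> insert (tv \<alpha>) G \<notin> kface n (Borel n \<mu>) \<alpha> (Suc i)}"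
        using tv0 F0 by simp
    qed
  next
    case False
    define t where "t = tv \<alpha>"
    have ta: "t \<in># \<alpha>" using tv_in[OF False] t_def by simp
    have key: "t \<notin> F \<longleftrightarrow> (\<forall>x\<in>F. \<exists>y\<in>#\<alpha> - mset_set F. x < y)" if FF: "F \<in> kface n (Borel n \<mu>) \<alpha> i" for F
    proof
      note fp = face_props[OF FF]
      assume tF: "t \<notin> F"
      have "count (\<alpha> - mset_set F) t = count \<alpha> t" using tF fp(2) by (simp add: count_ms)
      then have tin: "t \<in># \<alpha> - mset_set F" using ta by (metis count_greater_zero_iff)
      show "\<forall>x\<in>F. \<exists>y\<in>#\<alpha> - mset_set F. x < y"
      proof
        fix x assume xF: "x \<in> F"
        have "x \<in># \<alpha>" using xF fp(2,4) by (auto simp: ms_sub_iff)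
        then have "x \<le> t" using tv_max t_def by simp
        moreover have "x \<noteq> t" using xF tF by auto
        ultimately have "x < t" by simp
        then show "\<exists>y\<in>#\<alpha> - mset_set F. x < y" using tin by (intro bexI[where x = t])
      qed
    next
      assume h: "\<forall>x\<in>F. \<exists>y\<in>#\<alpha> - mset_set F. x < y"
      show "t \<notin> F"
      proof
        assume "t \<in> F"
        then obtain y where "y \<in># \<alpha> - mset_set F" "t < y" using h by auto
        then have "y \<in># \<alpha>" "t < y" by (auto dest: in_diffD)
        then show False using tv_max t_def by force
      qed
    qed
    show ?thesis
    proof (intro set_eqI iffI)
      fix F assume F: "F \<in> {G \<in> kface n (Borel n \<mu>) \<alpha> i. tv \<alpha> \<notin> G \<and> insert (tv \<alpha>) G \<notin> kface n (Borel n \<mu>) \<alpha> (Suc i)}"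
      then have FF: "F \<in> kface n (Borel n \<mu>) \<alpha> i" and tF: "t \<notin> F" and nF: "insert t F \<notin> kface n (Borel n \<mu>) \<alpha> (Suc i)"
        using t_def by auto
      note fp = face_props[OF FF]
      have "\<alpha> - mset_set F \<in> mingens (Borel n \<mu>)" using face_ext_iff[OF mu al False FF] tF nF t_def by simp
      then show "F \<in> Eset n (Borel n \<mu>) \<alpha> i" using fp key[OF FF] tF unfolding Eset_def Fs_def by auto
    next
      fix F assume F: "F \<in> Eset n (Borel n \<mu>) \<alpha> i"
      then have "F \<in> kface n (Borel n \<mu>) \<alpha> i" using mingens_sub unfolding Eset_def Fs_def kface_def by auto
      moreover note fp = face_props[OF this]
      moreover have mg: "\<alpha> - mset_set F \<in> mingens (Borel n \<mu>)" using F unfolding Eset_def by auto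
      moreover have "t \<notin> F" using key[OF \<open>F \<in> kface n (Borel n \<mu>) \<alpha> i\<close>] F unfolding Eset_def Fs_def by auto
      ultimately show "F \<in> {G \<in> kface n (Borel n \<mu>) \<alpha> i. tv \<alpha> \<notin> G \<and> insert (tv \<alpha>) G \<notin> kface n (Borel n \<mu>) \<alpha> (Suc i)}"
        using face_ext_iff[OF mu al False] t_def by auto
    qed
  qed
  show ?thesis using khomdim_eq[OF mu al, where 'a='a] eq by simp
qed


lemma mingens_finite:
  assumes mu: "set_mset \<mu> \<subseteq> {1..n}"
  shows "finite (mingens (Borel n \<mu>))"
proof -
  have "mingens (Borel n \<mu>) \<subseteq> multisets_of_size {1..n} (size \<mu>)"
    unfolding mingens_char[OF mu] multisets_of_size_def by auto
  moreover have "finite (multisets_of_size {1..n} (size \<mu>))" by (intro finite_multisets_of_size) simp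
  ultimately show ?thesis by (rule finite_subset)
qed

lemma Fs_eq:
  assumes g: "set_mset g \<subseteq> {1..n}"
  shows "Fs n g i = {F. F \<subseteq> {1..<Msup g} \<and> card F = i}"
proof -
  have fin: "finite (insert 1 (set_mset g))" by simp
  have e: "(x \<in> {1..n} \<and> (\<exists>y\<in>#g. x < y)) \<longleftrightarrow> x \<in> {1..<Msup g}" for x
  proof
    assume h: "x \<in> {1..n} \<and> (\<exists>y\<in>#g. x < y)"
    then obtain y where "y \<in># g" "x < y" by auto
    moreover have "y \<le> Msup g" using \<open>y \<in># g\<close> fin unfolding Msup_def by (intro Max_ge) auto
    ultimately show "x \<in> {1..<Msup g}" using h by auto
  next
    assume h: "x \<in> {1..<Msup g}"
    have "Msup g \<in> insert 1 (set_mset g)" unfolding Msup_def using fin by (intro Max_in) auto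
    moreover have "Msup g \<noteq> 1" using h by auto
    ultimately have M: "Msup g \<in># g" by simp
    then have "Msup g \<le> n" using g by auto
    then show "x \<in> {1..n} \<and> (\<exists>y\<in>#g. x < y)" using h M by auto
  qed
  show ?thesis unfolding Fs_def using e by blast
qed

lemma card_Fs:
  assumes g: "set_mset g \<subseteq> {1..n}"
  shows "card (Fs n g i) = (Msup g - 1) choose i"
  unfolding Fs_eq[OF g] by (simp add: n_subsets)

lemma Fs_finite: "finite (Fs n g i)"
proof -
  have "Fs n g i \<subseteq> Pow {1..n}" unfolding Fs_def by auto
  then show ?thesis by (rule finite_subset) simp
qed

lemma Eset_finite: "finite (Eset n I \<alpha> i)"
proof -
  have "Eset n I \<alpha> i \<subseteq> Pow {1..n}" unfolding Eset_def Fs_def by auto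
  then show ?thesis by (rule finite_subset) simp
qed

lemma betti_formula:
  fixes T :: "'a::field itself"
  assumes mu: "set_mset \<mu> \<subseteq> {1..n}"
  shows "betti T n (Borel n \<mu>) i = (\<Sum>g\<in>mingens (Borel n \<mu>). (Msup g - 1) choose i)"
proof -
  define I where "I = Borel n \<mu>"
  define E where "E \<alpha> = Eset n I \<alpha> i" for \<alpha>
  define A where "A = {\<alpha> \<in> monomials n. card (E \<alpha>) \<noteq> 0}"
  define Q where "Q = (SIGMA g:mingens I. Fs n g i)"
  define \<phi> where "\<phi> p = (fst p + mset_set (snd p), snd p)" for p :: "mon \<times> nat set"
  have kh: "khomdim T n I \<alpha> i = card (E \<alpha>)" if "\<alpha> \<in> monomials n" for \<alpha>
    using khom_E[OF mu, of \<alpha> T i] that unfolding I_def E_def monomials_def by simp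
  have b1: "betti T n I i = (\<Sum>\<alpha>\<in>A. card (E \<alpha>))"
  proof -
    have "{\<alpha> \<in> monomials n. khomdim T n I \<alpha> i \<noteq> 0} = A" unfolding A_def using kh by auto
    then show ?thesis unfolding betti_def using kh A_def by (auto intro!: sum.cong)
  qed
  have mgI: "set_mset g \<subseteq> {1..n}" if "g \<in> mingens I" for g
    using that mingens_sub borel_sub unfolding I_def by blast
  have SQ: "Sigma A E = \<phi> ` Q"
  proof (intro set_eqI iffI)
    fix p assume p: "p \<in> Sigma A E"
    then obtain \<alpha> F where pa: "p = (\<alpha>, F)" "\<alpha> \<in> A" "F \<in> E \<alpha>" by auto
    then have F: "mset_set F \<subseteq># \<alpha>" "F \<in> Fs n (\<alpha> - mset_set F) i" "\<alpha> - mset_set F \<in> mingens I"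
      unfolding E_def Eset_def by auto
    have "\<alpha> = (\<alpha> - mset_set F) + mset_set F" using F(1) by simp
    then have "p = \<phi> (\<alpha> - mset_set F, F)" unfolding \<phi>_def pa by simp
    moreover have "(\<alpha> - mset_set F, F) \<in> Q" unfolding Q_def using F by simp
    ultimately show "p \<in> \<phi> ` Q" by blast
  next
    fix p assume "p \<in> \<phi> ` Q"
    then obtain g F where gF: "g \<in> mingens I" "F \<in> Fs n g i" "p = (g + mset_set F, F)"
      unfolding Q_def \<phi>_def by auto
    have Fn: "F \<subseteq> {1..n}" using gF(2) unfolding Fs_def by auto
    then have finF: "finite F" by (rule finite_subset) simp
    have FE: "F \<in> E (g + mset_set F)" unfolding E_def Eset_def using gF by simp
    have "g + mset_set F \<in> monomials n" unfolding monomials_def using mgI[OF gF(1)] Fn finF by auto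
    moreover have "card (E (g + mset_set F)) \<noteq> 0" using FE Eset_finite unfolding E_def by (auto simp: card_eq_0_iff)
    ultimately show "p \<in> Sigma A E" using FE gF(3) unfolding A_def by simp
  qed
  have injphi: "inj_on \<phi> Q" unfolding \<phi>_def by (rule inj_onI) (auto simp: prod_eq_iff)
  have finQ: "finite Q" unfolding Q_def using mingens_finite[OF mu] Fs_finite unfolding I_def by auto
  have finA: "finite A"
  proof -
    have "A \<subseteq> fst ` (\<phi> ` Q)"
    proof
      fix \<alpha> assume a: "\<alpha> \<in> A"
      then have "E \<alpha> \<noteq> {}" unfolding A_def by auto
      then obtain F where "F \<in> E \<alpha>" by auto
      then have "(\<alpha>, F) \<in> Sigma A E" using a by auto
      then have "(\<alpha>, F) \<in> \<phi> ` Q" unfolding SQ .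
      then have "fst (\<alpha>, F) \<in> fst ` (\<phi> ` Q)" by (rule imageI)
      then show "\<alpha> \<in> fst ` (\<phi> ` Q)" by simp
    qed
    then show ?thesis using finQ by (rule finite_subset[OF _ finite_imageI[OF finite_imageI]])
  qed
  have "(\<Sum>\<alpha>\<in>A. card (E \<alpha>)) = card (Sigma A E)"
    using finA Eset_finite unfolding E_def by (simp add: card_SigmaI)
  also have "\<dots> = card Q" unfolding SQ using injphi by (rule card_image)
  also have "\<dots> = (\<Sum>g\<in>mingens I. card (Fs n g i))"
    unfolding Q_def using mingens_finite[OF mu] Fs_finite unfolding I_def by (simp add: card_SigmaI)
  also have "\<dots> = (\<Sum>g\<in>mingens I. (Msup g - 1) choose i)"
    using card_Fs mgI by (intro sum.cong) auto
  finally show ?thesis using b1 unfolding I_def by simp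
qed


lemma cle_size_all:
  assumes "cle \<mu> j = size \<mu>" "x \<in># \<mu>"
  shows "x \<le> j"
proof (rule ccontr)
  assume "\<not> x \<le> j"
  then have "cle (\<mu> - {#x#}) j = cle \<mu> j" using cle_diff[OF assms(2), of j] by simp
  moreover have "cle (\<mu> - {#x#}) j \<le> size (\<mu> - {#x#})" by (rule cle_le_size)
  moreover have "size (\<mu> - {#x#}) < size \<mu>"
  proof -
    have "\<mu> \<noteq> {#}" using assms(2) by auto
    then have "0 < size \<mu>" by (simp add: nonempty_has_size)
    then show ?thesis using assms(2) by (simp add: size_Diff_singleton)
  qed
  ultimately show False using assms(1) by simp
qed

lemma all_le:
  assumes "bdom g m0" "size g = size m0" "\<forall>x\<in>#m0. x \<le> j" "x \<in># g"
  shows "x \<le> j"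
proof -
  have "cle m0 j = size m0" using assms(3) by (rule cle_big)
  moreover have "cle m0 j \<le> cle g j" using assms(1) unfolding bdom_def by blast
  moreover have "cle g j \<le> size g" by (rule cle_le_size)
  ultimately have "cle g j = size g" using assms(2) by simp
  then show ?thesis using assms(4) by (rule cle_size_all)
qed

lemma Msup_ge1: "1 \<le> Msup g"
  unfolding Msup_def by (rule Max_ge) auto

lemma Msup_ge: "x \<in># g \<Longrightarrow> x \<le> Msup g"
  unfolding Msup_def by (rule Max_ge) auto

lemma Msup_add: "Msup g \<le> l \<Longrightarrow> Msup (add_mset l g) = l"
  unfolding Msup_def
proof (rule Max_eqI)
  assume "Max (insert 1 (set_mset g)) \<le> l"
  then have "y \<le> l" if "y \<in> insert 1 (set_mset g)" for y
    using that Max_ge[of "insert 1 (set_mset g)" y] by auto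
  then show "y \<le> l" if "y \<in> insert 1 (set_mset (add_mset l g))" for y using that by auto
qed auto

lemma Msup_le: "1 \<le> l \<Longrightarrow> \<forall>x\<in>#g. x \<le> l \<Longrightarrow> Msup g \<le> l"
  unfolding Msup_def by (rule Max.boundedI) auto

lemma hockey:
  assumes "1 \<le> M" "M \<le> k"
  shows "(\<Sum>l\<in>{M..k}. (l - 1) choose i) + ((M - 1) choose (Suc i)) = k choose (Suc i)"
  using assms(2)
proof (induction k)
  case 0 then show ?case using assms(1) by simp
next
  case (Suc k)
  show ?case
  proof (cases "M = Suc k")
    case True then show ?thesis by simp
  next
    case False
    then have "M \<le> k" using Suc by simp
    then have "(\<Sum>l\<in>{M..Suc k}. (l - 1) choose i) = (\<Sum>l\<in>{M..k}. (l - 1) choose i) + (k choose i)" by simp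
    then show ?thesis using Suc.IH[OF \<open>M \<le> k\<close>] by simp
  qed
qed

context
  fixes n k :: nat and m :: mon
  assumes ne: "m \<noteq> {#}" and ms: "set_mset m \<subseteq> {1..n}" and mk: "maxvar m = k"
begin

lemma km: "k \<in># m" using ne mk unfolding maxvar_def by (auto intro: Max_in)

lemma m_eq: "m = add_mset k (m - {#k#})" using km by simp

lemma m'_sub: "set_mset (m - {#k#}) \<subseteq> {1..n}" using ms by (meson in_diffD subset_iff)

lemma m_le: "\<forall>x\<in>#m. x \<le> k" using mk unfolding maxvar_def by auto

lemma k1: "1 \<le> k \<and> k \<le> n" using km ms by auto

lemma cle_m: "cle m j = cle (m - {#k#}) j + (if k \<le> j then 1 else 0)"
  using cle_add_mset[of k "m - {#k#}" j] m_eq by simp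

lemma Gb'_le: "g' \<in> mingens (Borel n (m - {#k#})) \<Longrightarrow> Msup g' \<le> k"
proof -
  assume g': "g' \<in> mingens (Borel n (m - {#k#}))"
  then have "set_mset g' \<subseteq> {1..n}" "bdom g' (m - {#k#})" "size g' = size (m - {#k#})"
    using mingens_char[OF m'_sub] by auto
  moreover have "\<forall>x\<in>#m - {#k#}. x \<le> k" using m_le by (auto dest: in_diffD)
  ultimately have "\<forall>x\<in>#g'. x \<le> k" using all_le by blast
  then show "Msup g' \<le> k" using k1 by (intro Msup_le) auto
qed

lemma into_Gb:
  assumes g': "g' \<in> mingens (Borel n (m - {#k#}))" and l: "Msup g' \<le> l" "l \<le> k"
  shows "add_mset l g' \<in> mingens (Borel n m)"
proof -
  have g'p: "set_mset g' \<subseteq> {1..n}" "bdom g' (m - {#k#})" "size g' = size (m - {#k#})"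
    using g' mingens_char[OF m'_sub] by auto
  have l1: "1 \<le> l" using Msup_ge1[of g'] l by simp
  have "set_mset (add_mset l g') \<subseteq> {1..n}" using g'p l1 l k1 by auto
  moreover have "size (add_mset l g') = size m" using g'p(3) m_eq by (metis size_add_mset)
  moreover have "bdom (add_mset l g') m" unfolding bdom_def
  proof
    fix j
    have "cle (m - {#k#}) j \<le> cle g' j" using g'p(2) unfolding bdom_def by blast
    then show "cle m j \<le> cle (add_mset l g') j" using cle_m[of j] cle_add_mset[of l g' j] l by auto
  qed
  ultimately show ?thesis using mingens_char[OF ms] by auto
qed

lemma from_Gb:
  assumes g: "g \<in> mingens (Borel n m)"
  shows "g = add_mset (Max (set_mset g)) (g - {#Max (set_mset g)#}) \<and>
    g - {#Max (set_mset g)#} \<in> mingens (Borel n (m - {#k#})) \<and>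
    Msup (g - {#Max (set_mset g)#}) \<le> Max (set_mset g) \<and> Max (set_mset g) \<le> k"
proof -
  have gp: "set_mset g \<subseteq> {1..n}" "bdom g m" "size g = size m" using g mingens_char[OF ms] by auto
  have "g \<noteq> {#}" using gp(3) ne by auto
  define l where "l = Max (set_mset g)"
  define g' where "g' = g - {#l#}"
  have lg: "l \<in># g" unfolding l_def using \<open>g \<noteq> {#}\<close> by (intro Max_in) auto
  have gl: "\<forall>x\<in>#g. x \<le> l" unfolding l_def by auto
  have geq: "g = add_mset l g'" unfolding g'_def using lg by simp
  have lk: "l \<le> k" using all_le[OF gp(2) gp(3) m_le lg] .
  have l1: "1 \<le> l" using lg gp(1) by auto
  have g'l: "\<forall>x\<in>#g'. x \<le> l" using gl g'_def by (auto dest: in_diffD)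
  have Ml: "Msup g' \<le> l" using Msup_le[OF l1 g'l] .
  have sz: "size g' = size (m - {#k#})" using gp(3) geq m_eq by (metis size_add_mset nat.inject)
  have bd: "bdom g' (m - {#k#})" unfolding bdom_def
  proof
    fix j
    have c1: "cle g j = cle g' j + (if l \<le> j then 1 else 0)" using cle_add_mset[of l g' j] geq by simp
    have c2: "cle m j \<le> cle g j" using gp(2) unfolding bdom_def by blast
    show "cle (m - {#k#}) j \<le> cle g' j"
    proof (cases "l \<le> j")
      case True
      then have "cle g' j = size g'" using g'l by (intro cle_big) force
      then show ?thesis using sz cle_le_size[of "m - {#k#}" j] by simp
    next
      case False
      then show ?thesis using c1 c2 cle_m[of j] by simp
    qed
  qed
  have "set_mset g' \<subseteq> {1..n}" using gp(1) g'_def by (meson in_diffD subset_iff)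
  then have "g' \<in> mingens (Borel n (m - {#k#}))" using mingens_char[OF m'_sub] sz bd by auto
  then show ?thesis using geq Ml lk unfolding l_def g'_def by simp
qed

lemma Gb_bij:
  "mingens (Borel n m) = (\<lambda>p. add_mset (snd p) (fst p)) ` (SIGMA g':mingens (Borel n (m - {#k#})). {Msup g'..k})"
proof (intro set_eqI iffI)
  fix g assume "g \<in> mingens (Borel n m)"
  from from_Gb[OF this] show "g \<in> (\<lambda>p. add_mset (snd p) (fst p)) ` (SIGMA g':mingens (Borel n (m - {#k#})). {Msup g'..k})"
    by (intro image_eqI[where x = "(g - {#Max (set_mset g)#}, Max (set_mset g))"]) auto
next
  fix g assume "g \<in> (\<lambda>p. add_mset (snd p) (fst p)) ` (SIGMA g':mingens (Borel n (m - {#k#})). {Msup g'..k})"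
  then show "g \<in> mingens (Borel n m)" using into_Gb by auto
qed

lemma Gb_inj: "inj_on (\<lambda>p. add_mset (snd p) (fst p)) (SIGMA g':mingens (Borel n (m - {#k#})). {Msup g'..k})"
proof (rule inj_onI)
  fix p q assume p: "p \<in> (SIGMA g':mingens (Borel n (m - {#k#})). {Msup g'..k})"
    and q: "q \<in> (SIGMA g':mingens (Borel n (m - {#k#})). {Msup g'..k})"
    and e: "add_mset (snd p) (fst p) = add_mset (snd q) (fst q)"
  have "Msup (add_mset (snd p) (fst p)) = snd p" using p by (intro Msup_add) auto
  moreover have "Msup (add_mset (snd q) (fst q)) = snd q" using q by (intro Msup_add) auto
  ultimately have "snd p = snd q" using e by simp
  then have "fst p = fst q" using e by simp
  then show "p = q" using \<open>snd p = snd q\<close> by (simp add: prod_eq_iff)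
qed

lemma sum_Gb:
  "(\<Sum>g\<in>mingens (Borel n m). f (Msup g)) =
   (\<Sum>g'\<in>mingens (Borel n (m - {#k#})). \<Sum>l\<in>{Msup g'..k}. f l)"
proof -
  have "(\<Sum>g\<in>mingens (Borel n m). f (Msup g)) =
      (\<Sum>p\<in>(SIGMA g':mingens (Borel n (m - {#k#})). {Msup g'..k}). f (Msup (add_mset (snd p) (fst p))))"
    unfolding Gb_bij using Gb_inj by (simp add: sum.reindex)
  also have "\<dots> = (\<Sum>p\<in>(SIGMA g':mingens (Borel n (m - {#k#})). {Msup g'..k}). f (snd p))"
    by (intro sum.cong refl) (auto simp: Msup_add)
  also have "\<dots> = (\<Sum>g'\<in>mingens (Borel n (m - {#k#})). \<Sum>l\<in>{Msup g'..k}. f l)"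
    using mingens_finite[OF m'_sub] by (simp add: sum.Sigma split_def)
  finally show ?thesis .
qed

lemma w_eq: "w k (Borel n m) = card (mingens (Borel n (m - {#k#})))"
proof -
  have "{g \<in> mingens (Borel n m). maxvar g = k} = add_mset k ` mingens (Borel n (m - {#k#}))"
  proof (intro set_eqI iffI)
    fix g assume g: "g \<in> {g \<in> mingens (Borel n m). maxvar g = k}"
    then have "Max (set_mset g) = k" unfolding maxvar_def by simp
    then show "g \<in> add_mset k ` mingens (Borel n (m - {#k#}))" using from_Gb[of g] g by auto
  next
    fix g assume "g \<in> add_mset k ` mingens (Borel n (m - {#k#}))"
    then obtain g' where g': "g' \<in> mingens (Borel n (m - {#k#}))" "g = add_mset k g'" by auto
    have Mk: "Msup g' \<le> k" using Gb'_le[OF g'(1)] .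
    have "g \<in> mingens (Borel n m)" using into_Gb[OF g'(1) Mk] g'(2) by simp
    moreover have "maxvar g = k"
    proof -
      have "\<forall>x\<in>#g'. x \<le> k" using Mk Msup_ge by (meson le_trans)
      then show ?thesis unfolding maxvar_def g'(2) by (intro Max_eqI) auto
    qed
    ultimately show "g \<in> {g \<in> mingens (Borel n m). maxvar g = k}" by simp
  qed
  moreover have "inj_on (add_mset k) (mingens (Borel n (m - {#k#})))" by (simp add: inj_on_def)
  ultimately show ?thesis unfolding w_def by (simp add: card_image)
qed

end

theorem proposition7p1:
  fixes T :: "'a::field itself" and n k i :: nat and m :: mon
  assumes "m \<noteq> {#}" and "set_mset m \<subseteq> {1..n}" and "maxvar m = k"
  shows "(if i = 0 then 0 else betti T n (Borel n m) (i - 1))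
           + betti T n (Borel n (m - {#k#})) i
         = (k choose i) * w k (Borel n m)"
proof -
  note a = assms
  define G' where "G' = mingens (Borel n (m - {#k#}))"
  have b': "betti T n (Borel n (m - {#k#})) j = (\<Sum>g\<in>G'. (Msup g - 1) choose j)" for j
    unfolding G'_def by (rule betti_formula[OF m'_sub[OF a]])
  have w: "w k (Borel n m) = card G'" unfolding G'_def by (rule w_eq[OF a])
  show ?thesis
  proof (cases i)
    case 0
    then show ?thesis using b' w by simp
  next
    case (Suc i')
    have "betti T n (Borel n m) i' = (\<Sum>g\<in>mingens (Borel n m). (Msup g - 1) choose i')"
      by (rule betti_formula[OF a(2)])
    also have "\<dots> = (\<Sum>g'\<in>G'. \<Sum>l\<in>{Msup g'..k}. (l - 1) choose i')"
      unfolding G'_def by (rule sum_Gb[OF a])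
    finally have b: "betti T n (Borel n m) i' = (\<Sum>g'\<in>G'. \<Sum>l\<in>{Msup g'..k}. (l - 1) choose i')" .
    have "betti T n (Borel n m) i' + betti T n (Borel n (m - {#k#})) i =
        (\<Sum>g'\<in>G'. (\<Sum>l\<in>{Msup g'..k}. (l - 1) choose i') + ((Msup g' - 1) choose (Suc i')))"
      unfolding b b' Suc by (simp add: sum.distrib)
    also have "\<dots> = (\<Sum>g'\<in>G'. k choose (Suc i'))"
      using Gb'_le[OF a] Msup_ge1 unfolding G'_def by (intro sum.cong refl hockey) auto
    also have "\<dots> = (k choose i) * w k (Borel n m)" using w Suc by simp
    finally show ?thesis using Suc by simp
  qed
qed


end
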